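(* Let $\Gamma=G_4$ be the graph with two vertices $V_\alpha,V_\beta$, one loop at $V_\alpha$, one loop at $V_\beta$, and exactly one edge joining $V_\alpha$ and $V_\beta$, with degrees $d_\alpha,d_\beta\in\mathbb{Z}$. The family $\mathcal{F}(G_4,(d_\alpha,d_\beta))$ is jumping if and only if one of the following holds: (i) $d_\alpha<0$ and $d_\beta=1$; (ii) $d_\alpha=0$ and $d_\beta\ge 0$; (iii) $d_\alpha=1$ and $d_\beta<0$; (iv) $d_\alpha\ge 0$ and $d_\beta=0$; (v) $d_\alpha=d_\beta=1$.
   Context: Let $\Gamma$ be a connected graph (loops and multiple edges allowed) with vertices $V_1,\dots,V_n$ and integers $d_1,\dots,d_n$. A nodal curve with dual graph $\Gamma$ and rational components is a curve $C$ obtained from the disjoint union of copies $\mathbb{P}^1_{V_i}$ of $\mathbb{P}^1$ by choosing, for each edge of $\Gamma$, a point on each of its endpoint copies (all chosen points distinct) and identifying these two points to a node. A line bundle on $C$ is equivalent to line bundles on each $\mathbb{P}^1_{V_i}$ together with, at each node, an identification of the two fibres (descent data, a scalar in $\mathbb{C}^*$ after trivialising); global sections are tuples of sections on the $\mathbb{P}^1$'s compatible with these identifications. The family $\mathcal{F}(\Gamma,(d_i))$ consists of all pairs $(C,L)$ with $C$ such a curve (any choice of node positions) and $L$ a line bundle on $C$ whose pullback to $\mathbb{P}^1_{V_i}$ has degree $d_i$ for all $i$ (any descent data). $\Gamma$ with degrees $(d_i)$ is called jumping if $h^0(C,L)$ is not constant on $\mathcal{F}(\Gamma,(d_i))$,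 and non-jumping otherwise. *)

theory Defs
  imports "HOL-Computational_Algebra.Polynomial" "HOL-Library.Product_Plus"
begin

text \<open>Points of P^1 are given by homogeneous coordinates (a,b) in C^2 - {0}.
  A section of O(d) on P^1 (d >= 0) is a homogeneous polynomial of degree d,
  encoded as a univariate polynomial p of degree at most d, standing for
  sum_i coeff p i * X^i * Y^(d-i).\<close>

definition hom_sections :: "int \<Rightarrow> complex poly set" where
  "hom_sections d = (if d < 0 then {0} else {p. degree p \<le> nat d})"

definition hom_eval :: "int \<Rightarrow> complex poly \<Rightarrow> complex \<times> complex \<Rightarrow> complex" where
  "hom_eval d p x = (\<Sum>i\<le>nat d. coeff p i * fst x ^ i * snd x ^ (nat d - i))"

definition proj_point :: "complex \<times> complex \<Rightarrow> bool" where
  "proj_point x \<longleftrightarrow> x \<noteq> (0, 0)"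

definition proj_distinct :: "complex \<times> complex \<Rightarrow> complex \<times> complex \<Rightarrow> bool" where
  "proj_distinct x y \<longleftrightarrow> fst x * snd y \<noteq> fst y * snd x"

definition pair_scale :: "complex \<Rightarrow> complex poly \<times> complex poly \<Rightarrow> complex poly \<times> complex poly" where
  "pair_scale c st = (smult c (fst st), smult c (snd st))"

text \<open>Admissible data for a curve with dual graph G4 and a line bundle on it:
  p1,p2 (loop node on V_alpha), p3 (edge node on V_alpha), q1,q2 (loop node on V_beta),
  q3 (edge node on V_beta); all points on each component pairwise distinct;
  descent data l1 (loop at alpha), l2 (loop at beta), l3 (edge) nonzero scalars.\<close>
definition G4_admissible ::
  "(complex \<times> complex) \<Rightarrow> (complex \<times> complex) \<Rightarrow> (complex \<times> complex) \<Rightarrow>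
   (complex \<times> complex) \<Rightarrow> (complex \<times> complex) \<Rightarrow> (complex \<times> complex) \<Rightarrow>
   complex \<Rightarrow> complex \<Rightarrow> complex \<Rightarrow> bool" where
  "G4_admissible p1 p2 p3 q1 q2 q3 l1 l2 l3 \<longleftrightarrow>
     proj_point p1 \<and> proj_point p2 \<and> proj_point p3 \<and>
     proj_point q1 \<and> proj_point q2 \<and> proj_point q3 \<and>
     proj_distinct p1 p2 \<and> proj_distinct p1 p3 \<and> proj_distinct p2 p3 \<and>
     proj_distinct q1 q2 \<and> proj_distinct q1 q3 \<and> proj_distinct q2 q3 \<and>
     l1 \<noteq> 0 \<and> l2 \<noteq> 0 \<and> l3 \<noteq> 0"

definition G4_sections ::
  "int \<Rightarrow> int \<Rightarrow> (complex \<times> complex) \<Rightarrow> (complex \<times> complex) \<Rightarrow> (complex \<times> complex) \<Rightarrow>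
   (complex \<times> complex) \<Rightarrow> (complex \<times> complex) \<Rightarrow> (complex \<times> complex) \<Rightarrow>
   complex \<Rightarrow> complex \<Rightarrow> complex \<Rightarrow> (complex poly \<times> complex poly) set" where
  "G4_sections da db p1 p2 p3 q1 q2 q3 l1 l2 l3 =
     {(s, t). s \<in> hom_sections da \<and> t \<in> hom_sections db \<and>
        hom_eval da s p1 = l1 * hom_eval da s p2 \<and>
        hom_eval db t q1 = l2 * hom_eval db t q2 \<and>
        hom_eval da s p3 = l3 * hom_eval db t q3}"

definition G4_h0 ::
  "int \<Rightarrow> int \<Rightarrow> (complex \<times> complex) \<Rightarrow> (complex \<times> complex) \<Rightarrow> (complex \<times> complex) \<Rightarrow>
   (complex \<times> complex) \<Rightarrow> (complex \<times> complex) \<Rightarrow> (complex \<times> complex) \<Rightarrow>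
   complex \<Rightarrow> complex \<Rightarrow> complex \<Rightarrow> nat" where
  "G4_h0 da db p1 p2 p3 q1 q2 q3 l1 l2 l3 =
     vector_space.dim pair_scale (G4_sections da db p1 p2 p3 q1 q2 q3 l1 l2 l3)"

definition G4_jumping :: "int \<Rightarrow> int \<Rightarrow> bool" where
  "G4_jumping da db \<longleftrightarrow>
     (\<exists>p1 p2 p3 q1 q2 q3 l1 l2 l3 p1' p2' p3' q1' q2' q3' l1' l2' l3'.
        G4_admissible p1 p2 p3 q1 q2 q3 l1 l2 l3 \<and>
        G4_admissible p1' p2' p3' q1' q2' q3' l1' l2' l3' \<and>
        G4_h0 da db p1 p2 p3 q1 q2 q3 l1 l2 l3 \<noteq>
        G4_h0 da db p1' p2' p3' q1' q2' q3' l1' l2' l3')"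

end

theory Submission
  imports Defs
begin

interpretation pv: vector_space pair_scale
  by unfold_locales (auto simp: pair_scale_def smult_add_left smult_add_right)

context vector_space begin

lemma dim_insert_fin:
  assumes F: "finite F" "S \<subseteq> span F" and False: "x \<notin> span S"
  shows "dim (insert x S) = dim S + 1"
proof -
  obtain B where B: "B \<subseteq> span S" "independent B" "span S \<subseteq> span B" "card B = dim (span S)"
    using basis_exists [of "span S"] by blast
  have "span S \<subseteq> span F" using F(2) by (metis span_mono span_span)
  then have finB: "finite B" using independent_span_bound[OF F(1) B(2)] B(1) by blast
  have "dim (span (insert x S)) = Suc (dim S)"
  proof (rule dim_unique)
    show "insert x B \<subseteq> span (insert x S)"
      by (meson B(1) insertI1 insert_subset order_trans span_base span_mono subset_insertI)
    show "span (insert x S) \<subseteq> span (insert x B)"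
      by (metis \<open>B \<subseteq> span S\<close> \<open>span S \<subseteq> span B\<close> span_breakdown_eq span_subspace subsetI subspace_span)
    show "independent (insert x B)"
      by (metis B(1-3) independent_insert span_subspace subspace_span False)
    show "card (insert x B) = Suc (dim S)"
      using B False finB by (metis card_insert_disjoint dim_span in_mono span_base span_subspace subspace_span)
  qed
  then show ?thesis
    by (metis Suc_eq_plus1 dim_span)
qed

lemma dim_ker_step:
  fixes f :: "'b \<Rightarrow> 'a"
  assumes W: "subspace W" and F: "finite F" "W \<subseteq> span F"
    and add: "\<And>x y. f (x + y) = f x + f y" and hom: "\<And>c x. f (c *s x) = c * f x"
  shows "dim W = dim {x\<in>W. f x = 0} + (if \<exists>x\<in>W. f x \<noteq> 0 then 1 else 0)"
proof (cases "\<exists>x\<in>W. f x \<noteq> 0")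
  case False
  then have "{x\<in>W. f x = 0} = W" by auto
  then show ?thesis using False by simp
next
  case True
  then obtain x0 where x0: "x0 \<in> W" "f x0 \<noteq> 0" by blast
  define K where "K = {x\<in>W. f x = 0}"
  have diff: "f (x - y) = f x - f y" for x y
    by (metis add add_diff_cancel diff_add_cancel eq_diff_eq)
  have sK: "subspace K" unfolding K_def subspace_def
    using W hom add by (auto simp: subspace_def) (metis add.right_neutral add_left_cancel)
  have "x0 \<notin> K" using x0 by (simp add: K_def)
  have spK: "span K = K" using sK by (simp only: span_eq_iff)
  have nx: "x0 \<notin> span K" unfolding spK using \<open>x0 \<notin> K\<close> .
  have "span (insert x0 K) = W"
  proof
    show "span (insert x0 K) \<subseteq> W"
      using W x0 by (intro span_minimal) (auto simp: K_def)
    show "W \<subseteq> span (insert x0 K)"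
    proof
      fix w assume w: "w \<in> W"
      define c where "c = f w / f x0"
      have "w - c *s x0 \<in> K"
        using w x0 W by (auto simp: K_def c_def diff hom intro!: subspace_diff subspace_scale)
      then show "w \<in> span (insert x0 K)"
        unfolding span_breakdown_eq by (metis span_base)
    qed
  qed
  then have "dim W = dim (insert x0 K)" by (metis dim_span)
  also have "\<dots> = dim K + 1"
    by (rule dim_insert_fin[OF F(1) _ nx]) (use F(2) in \<open>auto simp: K_def\<close>)
  finally show ?thesis using True by (simp add: K_def)
qed

end

lemma hom_eval_add: "hom_eval d (p + q) x = hom_eval d p x + hom_eval d q x"
  by (simp add: hom_eval_def algebra_simps sum.distrib)
lemma hom_eval_smult: "hom_eval d (smult c p) x = c * hom_eval d p x"
  by (simp add: hom_eval_def sum_distrib_left algebra_simps)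
lemma hom_eval_0[simp]: "hom_eval d 0 x = 0"
  by (simp add: hom_eval_def)
lemma zero_in_sections[simp]: "0 \<in> hom_sections d"
  by (simp add: hom_sections_def)

lemma hev_b_nz:
  assumes "degree p \<le> m" "b \<noteq> 0"
  shows "hom_eval (int m) p (a,b) = b^m * poly p (a/b)"
proof -
  have "poly p y = (\<Sum>i\<le>m. coeff p i * y^i)" for y
    unfolding poly_altdef by (rule sum.mono_neutral_left) (use assms in \<open>auto simp: coeff_eq_0\<close>)
  then have "b^m * poly p (a/b) = (\<Sum>i\<le>m. b^m * (coeff p i * (a/b)^i))"
    by (simp add: sum_distrib_left)
  also have "\<dots> = (\<Sum>i\<le>m. coeff p i * a^i * b^(m-i))"
  proof (rule sum.cong)
    fix i assume "i \<in> {..m}"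
    then have "b^m = b^i * b^(m-i)" by (simp flip: power_add)
    then show "b^m * (coeff p i * (a/b)^i) = coeff p i * a^i * b^(m-i)"
      using assms(2) by (simp add: power_divide field_simps)
  qed simp
  finally show ?thesis by (simp add: hom_eval_def)
qed

lemma hev_b_z: "hom_eval (int m) p (a,0) = coeff p m * a^m"
proof -
  have "(\<Sum>i\<le>m. coeff p i * a^i * 0^(m-i)) = (\<Sum>i\<le>m. if i = m then coeff p m * a^m else 0)"
    by (rule sum.cong) (auto simp: power_0_left)
  then show ?thesis by (simp add: hom_eval_def)
qed

lemma coeff_mult_top:
  assumes "degree p \<le> m" "degree q \<le> n"
  shows "coeff (p*q) (m+n) = coeff p m * coeff q n"
proof (cases "degree p = m \<and> degree q = n")
  case True then show ?thesis using coeff_mult_degree_sum by metis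
next
  case False
  then have "degree p < m \<or> degree q < n" using assms by auto
  moreover have "degree (p*q) \<le> degree p + degree q" by (rule degree_mult_le)
  ultimately have "degree (p*q) < m + n \<and> (coeff p m = 0 \<or> coeff q n = 0)"
    using assms by (auto simp: coeff_eq_0)
  then show ?thesis by (auto simp: coeff_eq_0)
qed

lemma hom_eval_mult:
  assumes "degree p \<le> m" "degree q \<le> n"
  shows "hom_eval (int (m+n)) (p*q) x = hom_eval (int m) p x * hom_eval (int n) q x"
proof -
  obtain a b where x: "x = (a,b)" by fastforce
  show ?thesis
  proof (cases "b = 0")
    case True then show ?thesis
      using coeff_mult_top[OF assms] hev_b_z[of "m+n" "p*q" a] by (simp add: x hev_b_z power_add)
  next
    case False
    have "degree (p*q) \<le> m + n" using degree_mult_le[of p q] assms by linarith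
    then show ?thesis using False assms hev_b_nz[of "p*q" "m+n" b a]
      by (simp add: x hev_b_nz power_add)
  qed
qed

definition lf :: "complex \<times> complex \<Rightarrow> complex poly" where
  "lf y = [:- fst y, snd y:]"

lemma degree_lf: "degree (lf y) \<le> 1"
  by (simp add: lf_def)

lemma hom_eval_lf: "hom_eval 1 (lf y) x = snd y * fst x - fst y * snd x"
  by (simp add: hom_eval_def lf_def)

lemma hom_eval_lf_pow: "hom_eval (int k) (lf y ^ k) x = (hom_eval 1 (lf y) x)^k"
proof (induction k)
  case 0 then show ?case by (simp add: hom_eval_def)
next
  case (Suc k)
  have d: "degree (lf y ^ k) \<le> k" using degree_power_le[of "lf y" k] degree_lf[of y]
    by (metis dual_order.trans mult_le_mono1 mult_1)
  have "hom_eval (int (1 + k)) (lf y * lf y ^ k) x = hom_eval (int 1) (lf y) x * hom_eval (int k) (lf y ^ k) x"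
    by (rule hom_eval_mult[OF degree_lf d])
  then show ?case using Suc by simp
qed


definition alph :: "int \<Rightarrow> complex \<times> complex \<Rightarrow> complex \<times> complex \<Rightarrow> complex \<Rightarrow> bool" where
  "alph d x y l \<longleftrightarrow> (\<exists>s\<in>hom_sections d. hom_eval d s x \<noteq> l * hom_eval d s y)"

definition gam :: "int \<Rightarrow> complex \<times> complex \<Rightarrow> complex \<times> complex \<Rightarrow> complex \<times> complex \<Rightarrow> complex \<Rightarrow> bool" where
  "gam d x y z l \<longleftrightarrow> (\<exists>s\<in>hom_sections d. hom_eval d s x = l * hom_eval d s y \<and> hom_eval d s z \<noteq> 0)"

lemma alph_neg: "d < 0 \<Longrightarrow> \<not> alph d x y l"
  by (simp add: alph_def hom_sections_def)
lemma gam_neg: "d < 0 \<Longrightarrow> \<not> gam d x y z l"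
  by (simp add: gam_def hom_sections_def)

lemma hom_eval_zero_deg: "hom_eval 0 p x = coeff p 0"
  by (simp add: hom_eval_def)

lemma alph_0: "alph 0 x y l \<longleftrightarrow> l \<noteq> 1"
proof
  assume "alph 0 x y l" then show "l \<noteq> 1" by (auto simp: alph_def hom_eval_zero_deg)
next
  assume "l \<noteq> 1"
  then show "alph 0 x y l" unfolding alph_def hom_sections_def
    by (intro bexI[of _ 1]) (auto simp: hom_eval_zero_deg)
qed

lemma gam_0: "gam 0 x y z l \<longleftrightarrow> l = 1"
proof
  assume "gam 0 x y z l" then show "l = 1" by (auto simp: gam_def hom_eval_zero_deg)
next
  assume "l = 1"
  then show "gam 0 x y z l" unfolding gam_def hom_sections_def
    by (intro bexI[of _ 1]) (auto simp: hom_eval_zero_deg)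
qed

lemma alph_ge1:
  assumes "d \<ge> 1" "proj_distinct x y"
  shows "alph d x y l"
proof -
  define n where "n = nat d"
  have d: "d = int n" "n \<ge> 1" using assms(1) by (auto simp: n_def)
  have deg: "degree (lf y ^ n) \<le> n" using degree_power_le[of "lf y" n] degree_lf[of y]
    by (metis dual_order.trans mult_le_mono1 mult_1)
  have "hom_eval d (lf y ^ n) x \<noteq> 0"
    using assms(2) by (simp add: d hom_eval_lf_pow hom_eval_lf proj_distinct_def mult.commute)
  moreover have "hom_eval d (lf y ^ n) y = 0"
    using d by (simp add: hom_eval_lf_pow hom_eval_lf mult.commute)
  ultimately show ?thesis unfolding alph_def hom_sections_def
    using deg d by (intro bexI[of _ "lf y ^ n"]) auto
qed

lemma gam_ge2:
  assumes "d \<ge> 2" "proj_distinct x y" "proj_distinct x z" "proj_distinct y z"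
  shows "gam d x y z l"
proof -
  define n where "n = nat d - 1"
  have d: "d = int (1 + n)" "n \<ge> 1" using assms(1) by (auto simp: n_def)
  have deg: "degree (lf y ^ n) \<le> n" using degree_power_le[of "lf y" n] degree_lf[of y]
    by (metis dual_order.trans mult_le_mono1 mult_1)
  have ev: "hom_eval d (lf x * lf y ^ n) w = hom_eval 1 (lf x) w * (hom_eval 1 (lf y) w)^n" for w
    using hom_eval_mult[OF degree_lf deg, of x w] by (simp add: d hom_eval_lf_pow)
  have degs: "degree (lf x * lf y ^ n) \<le> nat d"
    using degree_mult_le[of "lf x" "lf y ^ n"] degree_lf[of x] deg d by linarith
  have "hom_eval d (lf x * lf y ^ n) z \<noteq> 0"
    using assms(3,4) by (simp add: ev hom_eval_lf proj_distinct_def mult.commute)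
  moreover have "hom_eval d (lf x * lf y ^ n) x = 0" "hom_eval d (lf x * lf y ^ n) y = 0"
    using d(2) by (simp_all add: ev hom_eval_lf mult.commute)
  ultimately show ?thesis unfolding gam_def hom_sections_def
    using degs d by (intro bexI[of _ "lf x * lf y ^ n"]) auto
qed

definition "P0 = ((1::complex),(0::complex))"
definition "Q0 = ((0::complex),(1::complex))"
definition "Z0 = ((1::complex),(1::complex))"

lemma gam_std_pos:
  assumes "d \<ge> 0" shows "gam d P0 Q0 Z0 1"
proof -
  define n where "n = nat d"
  have d: "d = int n" using assms by (simp add: n_def)
  define s :: "complex poly" where "s = 1 + monom 1 n"
  have deg: "degree s \<le> n" unfolding s_def
    by (metis degree_1 degree_add_le degree_monom_le le0)
  have "hom_eval d s P0 = (if n = 0 then 2 else 1)"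
    by (simp add: d P0_def hev_b_z s_def coeff_monom)
  moreover have "hom_eval d s Q0 = (if n = 0 then 2 else 1)"
    using hev_b_nz[OF deg, of 1 0] by (simp add: d Q0_def s_def poly_monom)
  moreover have "hom_eval d s Z0 = 2"
    using hev_b_nz[OF deg, of 1 1] by (simp add: d Z0_def s_def poly_monom)
  ultimately show ?thesis unfolding gam_def hom_sections_def
    using deg d by (intro bexI[of _ s]) auto
qed

lemma hom_eval_one: "hom_eval 1 s x = coeff s 0 * snd x + coeff s 1 * fst x"
  by (simp add: hom_eval_def)

lemma gam_std_m1: "\<not> gam 1 P0 Q0 Z0 (-1)"
  by (auto simp: gam_def hom_eval_one P0_def Q0_def Z0_def)

lemma std_adm: "l1 \<noteq> 0 \<Longrightarrow> l2 \<noteq> 0 \<Longrightarrow> l3 \<noteq> 0 \<Longrightarrow> G4_admissible P0 Q0 Z0 P0 Q0 Z0 l1 l2 l3"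
  by (simp add: G4_admissible_def P0_def Q0_def Z0_def proj_point_def proj_distinct_def)


lemma (in vector_space) ker_subspace:
  fixes f :: "'b \<Rightarrow> 'a"
  assumes W: "subspace W"
    and add: "\<And>x y. f (x + y) = f x + f y" and hom: "\<And>c x. f (c *s x) = c * f x"
  shows "subspace {x\<in>W. f x = 0}"
  using W hom add by (auto simp: subspace_def) (metis add.right_neutral add_left_cancel)

lemma sections_subspace: "pv.subspace (hom_sections da \<times> hom_sections db)"
  unfolding pv.subspace_def hom_sections_def pair_scale_def
  by (auto simp: zero_prod_def intro: order.trans[OF degree_add_le] order.trans[OF degree_smult_le])

lemma sections_fin:
  "hom_sections da \<times> hom_sections db \<subseteq>
     pv.span ((\<lambda>i. (monom 1 i, 0)) ` {..nat da + nat db} \<union> (\<lambda>i. (0, monom 1 i)) ` {..nat da + nat db})"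
  (is "_ \<subseteq> pv.span ?F")
proof
  fix x assume x: "x \<in> hom_sections da \<times> hom_sections db"
  obtain s t where st: "x = (s,t)" by fastforce
  define N where "N = nat da + nat db"
  have ds: "degree s \<le> N" and dt: "degree t \<le> N"
    using x by (auto simp: st N_def hom_sections_def split: if_splits)
  have es: "(s, 0) = (\<Sum>i\<le>N. pair_scale (coeff s i) (monom 1 i, 0))"
    by (rule prod_eqI) (simp_all add: fst_sum snd_sum pair_scale_def smult_monom poly_as_sum_of_monoms'[OF ds])
  have et: "(0, t) = (\<Sum>i\<le>N. pair_scale (coeff t i) (0, monom 1 i))"
    by (rule prod_eqI) (simp_all add: fst_sum snd_sum pair_scale_def smult_monom poly_as_sum_of_monoms'[OF dt])
  have "(s, 0) \<in> pv.span ?F" unfolding es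
    by (intro pv.span_sum pv.span_scale pv.span_base) (auto simp: N_def)
  moreover have "(0, t) \<in> pv.span ?F" unfolding et
    by (intro pv.span_sum pv.span_scale pv.span_base) (auto simp: N_def)
  ultimately have "(s,0) + (0,t) \<in> pv.span ?F" by (rule pv.span_add)
  then show "x \<in> pv.span ?F" by (simp add: st)
qed

definition Rf where
  "Rf da db p1 p2 p3 q1 q2 q3 l1 l2 l3 =
     of_bool (alph da p1 p2 l1) + of_bool (alph db q1 q2 l2) +
     (of_bool (gam da p1 p2 p3 l1 \<or> gam db q1 q2 q3 l2) :: nat)"

lemma h0_formula:
  assumes l3: "l3 \<noteq> 0"
  shows "G4_h0 da db p1 p2 p3 q1 q2 q3 l1 l2 l3 + Rf da db p1 p2 p3 q1 q2 q3 l1 l2 l3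
     = pv.dim (hom_sections da \<times> hom_sections db)"
proof -
  define W0 where "W0 = hom_sections da \<times> hom_sections db"
  define F where "F = (\<lambda>i. (monom (1::complex) i, 0::complex poly)) ` {..nat da + nat db} \<union> (\<lambda>i. (0, monom 1 i)) ` {..nat da + nat db}"
  define A where "A x = hom_eval da (fst x) p1 - l1 * hom_eval da (fst x) p2" for x :: "complex poly \<times> complex poly"
  define B where "B x = hom_eval db (snd x) q1 - l2 * hom_eval db (snd x) q2" for x :: "complex poly \<times> complex poly"
  define C where "C x = hom_eval da (fst x) p3 - l3 * hom_eval db (snd x) q3" for x :: "complex poly \<times> complex poly"
  define K1 where "K1 = {x\<in>W0. A x = 0}"
  define K2 where "K2 = {x\<in>K1. B x = 0}"
  define K3 where "K3 = {x\<in>K2. C x = 0}"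
  have finF: "finite F" by (simp add: F_def)
  have W0F: "W0 \<subseteq> pv.span F" using sections_fin by (simp add: W0_def F_def)
  have sW0: "pv.subspace W0" using sections_subspace by (simp add: W0_def)
  have Aadd: "A (x + y) = A x + A y" and Ahom: "A (pair_scale c x) = c * A x" for x y c
    by (simp_all add: A_def pair_scale_def hom_eval_add hom_eval_smult algebra_simps)
  have Badd: "B (x + y) = B x + B y" and Bhom: "B (pair_scale c x) = c * B x" for x y c
    by (simp_all add: B_def pair_scale_def hom_eval_add hom_eval_smult algebra_simps)
  have Cadd: "C (x + y) = C x + C y" and Chom: "C (pair_scale c x) = c * C x" for x y c
    by (simp_all add: C_def pair_scale_def hom_eval_add hom_eval_smult algebra_simps)
  have sK1: "pv.subspace K1" unfolding K1_def by (rule pv.ker_subspace[OF sW0 Aadd Ahom])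
  have sK2: "pv.subspace K2" unfolding K2_def by (rule pv.ker_subspace[OF sK1 Badd Bhom])
  have K1F: "K1 \<subseteq> pv.span F" using W0F by (auto simp: K1_def)
  have K2F: "K2 \<subseteq> pv.span F" using K1F by (auto simp: K2_def)
  have e1: "pv.dim W0 = pv.dim K1 + (if \<exists>x\<in>W0. A x \<noteq> 0 then 1 else 0)"
    unfolding K1_def by (rule pv.dim_ker_step[OF sW0 finF W0F Aadd Ahom])
  have e2: "pv.dim K1 = pv.dim K2 + (if \<exists>x\<in>K1. B x \<noteq> 0 then 1 else 0)"
    unfolding K2_def by (rule pv.dim_ker_step[OF sK1 finF K1F Badd Bhom])
  have e3: "pv.dim K2 = pv.dim K3 + (if \<exists>x\<in>K2. C x \<noteq> 0 then 1 else 0)"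
    unfolding K3_def by (rule pv.dim_ker_step[OF sK2 finF K2F Cadd Chom])
  have r1: "(\<exists>x\<in>W0. A x \<noteq> 0) \<longleftrightarrow> alph da p1 p2 l1"
  proof
    assume "\<exists>x\<in>W0. A x \<noteq> 0" then show "alph da p1 p2 l1"
      by (auto simp: W0_def A_def alph_def)
  next
    assume "alph da p1 p2 l1"
    then obtain s where "s \<in> hom_sections da" "hom_eval da s p1 \<noteq> l1 * hom_eval da s p2"
      by (auto simp: alph_def)
    then show "\<exists>x\<in>W0. A x \<noteq> 0" by (intro bexI[of _ "(s,0)"]) (auto simp: W0_def A_def)
  qed
  have r2: "(\<exists>x\<in>K1. B x \<noteq> 0) \<longleftrightarrow> alph db q1 q2 l2"
  proof
    assume "\<exists>x\<in>K1. B x \<noteq> 0" then show "alph db q1 q2 l2"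
      by (auto simp: K1_def W0_def B_def alph_def)
  next
    assume "alph db q1 q2 l2"
    then obtain t where "t \<in> hom_sections db" "hom_eval db t q1 \<noteq> l2 * hom_eval db t q2"
      by (auto simp: alph_def)
    then show "\<exists>x\<in>K1. B x \<noteq> 0" by (intro bexI[of _ "(0,t)"]) (auto simp: K1_def W0_def A_def B_def)
  qed
  have r3: "(\<exists>x\<in>K2. C x \<noteq> 0) \<longleftrightarrow> (gam da p1 p2 p3 l1 \<or> gam db q1 q2 q3 l2)"
  proof
    assume "\<exists>x\<in>K2. C x \<noteq> 0"
    then obtain s t where st: "(s,t) \<in> K2" "C (s,t) \<noteq> 0" by auto
    then have "hom_eval da s p3 \<noteq> 0 \<or> hom_eval db t q3 \<noteq> 0" by (auto simp: C_def)
    then show "gam da p1 p2 p3 l1 \<or> gam db q1 q2 q3 l2"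
      using st by (auto simp: K2_def K1_def W0_def A_def B_def gam_def)
  next
    assume "gam da p1 p2 p3 l1 \<or> gam db q1 q2 q3 l2"
    then show "\<exists>x\<in>K2. C x \<noteq> 0"
    proof
      assume "gam da p1 p2 p3 l1"
      then obtain s where "s \<in> hom_sections da" "hom_eval da s p1 = l1 * hom_eval da s p2" "hom_eval da s p3 \<noteq> 0"
        by (auto simp: gam_def)
      then show ?thesis by (intro bexI[of _ "(s,0)"]) (auto simp: K2_def K1_def W0_def A_def B_def C_def)
    next
      assume "gam db q1 q2 q3 l2"
      then obtain t where "t \<in> hom_sections db" "hom_eval db t q1 = l2 * hom_eval db t q2" "hom_eval db t q3 \<noteq> 0"
        by (auto simp: gam_def)
      then show ?thesis using l3 by (intro bexI[of _ "(0,t)"]) (auto simp: K2_def K1_def W0_def A_def B_def C_def)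
    qed
  qed
  have "G4_sections da db p1 p2 p3 q1 q2 q3 l1 l2 l3 = K3"
    by (auto simp: G4_sections_def K3_def K2_def K1_def W0_def A_def B_def C_def)
  then have "G4_h0 da db p1 p2 p3 q1 q2 q3 l1 l2 l3 = pv.dim K3" by (simp add: G4_h0_def)
  then show ?thesis using e1 e2 e3 r1 r2 r3 by (simp add: Rf_def W0_def)
qed


lemma h0_eq:
  assumes "G4_admissible p1 p2 p3 q1 q2 q3 l1 l2 l3"
  shows "G4_h0 da db p1 p2 p3 q1 q2 q3 l1 l2 l3 =
    pv.dim (hom_sections da \<times> hom_sections db) - Rf da db p1 p2 p3 q1 q2 q3 l1 l2 l3"
  using h0_formula[of l3 da db p1 p2 p3 q1 q2 q3 l1 l2] assms by (simp add: G4_admissible_def)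

lemma h0_le:
  assumes "G4_admissible p1 p2 p3 q1 q2 q3 l1 l2 l3"
  shows "Rf da db p1 p2 p3 q1 q2 q3 l1 l2 l3 \<le> pv.dim (hom_sections da \<times> hom_sections db)"
  using h0_formula[of l3 da db p1 p2 p3 q1 q2 q3 l1 l2] assms by (simp add: G4_admissible_def)

lemma jump_by:
  fixes p1 p2 p3 q1 q2 q3 l1 l2 l3 p1' p2' p3' q1' q2' q3' l1' l2' l3'
  assumes "G4_admissible p1 p2 p3 q1 q2 q3 l1 l2 l3"
    "G4_admissible p1' p2' p3' q1' q2' q3' l1' l2' l3'"
    "Rf da db p1 p2 p3 q1 q2 q3 l1 l2 l3 \<noteq> Rf da db p1' p2' p3' q1' q2' q3' l1' l2' l3'"
  shows "G4_jumping da db"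
proof -
  have "G4_h0 da db p1 p2 p3 q1 q2 q3 l1 l2 l3 \<noteq> G4_h0 da db p1' p2' p3' q1' q2' q3' l1' l2' l3'"
    using h0_eq[OF assms(1), of da db] h0_eq[OF assms(2), of da db]
      h0_le[OF assms(1), of da db] h0_le[OF assms(2), of da db] assms(3) by linarith
  note neq = this
  show ?thesis unfolding G4_jumping_def
    by (intro exI conjI, rule assms(1), rule assms(2), rule neq)
qed

lemma no_jump:
  assumes "\<And>p1 p2 p3 q1 q2 q3 l1 l2 l3. G4_admissible p1 p2 p3 q1 q2 q3 l1 l2 l3 \<Longrightarrow>
     Rf da db p1 p2 p3 q1 q2 q3 l1 l2 l3 = v"
  shows "\<not> G4_jumping da db"
proof
  assume "G4_jumping da db"
  then obtain p1 p2 p3 q1 q2 q3 l1 l2 l3 p1' p2' p3' q1' q2' q3' l1' l2' l3' where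
    H: "G4_admissible p1 p2 p3 q1 q2 q3 l1 l2 l3" "G4_admissible p1' p2' p3' q1' q2' q3' l1' l2' l3'"
       "G4_h0 da db p1 p2 p3 q1 q2 q3 l1 l2 l3 \<noteq> G4_h0 da db p1' p2' p3' q1' q2' q3' l1' l2' l3'"
    unfolding G4_jumping_def by blast
  then show False using h0_eq[OF H(1), of da db] h0_eq[OF H(2), of da db] assms[OF H(1)] assms[OF H(2)]
    by simp
qed

theorem mainTheorem11:
  fixes da db :: int
  shows "G4_jumping da db \<longleftrightarrow>
    ((da < 0 \<and> db = 1) \<or> (da = 0 \<and> db \<ge> 0) \<or> (da = 1 \<and> db < 0) \<or>
     (da \<ge> 0 \<and> db = 0) \<or> (da = 1 \<and> db = 1))"
proof
  assume J: "G4_jumping da db"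
  show "((da < 0 \<and> db = 1) \<or> (da = 0 \<and> db \<ge> 0) \<or> (da = 1 \<and> db < 0) \<or>
     (da \<ge> 0 \<and> db = 0) \<or> (da = 1 \<and> db = 1))"
  proof (rule ccontr)
    assume nc: "\<not> ?thesis"
    define v :: nat where "v = of_bool (da \<ge> 1) + of_bool (db \<ge> 1) + of_bool (\<not> (da < 0 \<and> db < 0))"
    have "Rf da db p1 p2 p3 q1 q2 q3 l1 l2 l3 = v" if adm: "G4_admissible p1 p2 p3 q1 q2 q3 l1 l2 l3"
      for p1 p2 p3 q1 q2 q3 l1 l2 l3
    proof -
      have dist: "proj_distinct p1 p2" "proj_distinct p1 p3" "proj_distinct p2 p3"
        "proj_distinct q1 q2" "proj_distinct q1 q3" "proj_distinct q2 q3"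
        using adm by (auto simp: G4_admissible_def)
      have cs: "(da < 0 \<and> db < 0) \<or> (da < 0 \<and> db = 0) \<or> (da < 0 \<and> db \<ge> 2) \<or>
        (da = 0 \<and> db < 0) \<or> (da \<ge> 2 \<and> db < 0) \<or> (da \<ge> 1 \<and> db \<ge> 1 \<and> (da \<ge> 2 \<or> db \<ge> 2))"
        using nc by presburger
      consider (nn) "da < 0" "db < 0" | (n0) "da < 0" "db = 0" | (n2) "da < 0" "db \<ge> 2"
        | (zn) "da = 0" "db < 0" | (tn) "da \<ge> 2" "db < 0" | (pp) "da \<ge> 1" "db \<ge> 1" "da \<ge> 2 \<or> db \<ge> 2"
        using cs by argo
      then show ?thesis
      proof cases
        case nn then show ?thesis by (simp add: Rf_def v_def alph_neg gam_neg)
      next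
        case n0 then show ?thesis by (simp add: Rf_def v_def alph_neg gam_neg alph_0 gam_0)
      next
        case n2 then show ?thesis using alph_ge1[of db q1 q2 l2] gam_ge2[of db q1 q2 q3 l2] dist
          by (simp add: Rf_def v_def alph_neg gam_neg)
      next
        case zn then show ?thesis by (simp add: Rf_def v_def alph_neg gam_neg alph_0 gam_0)
      next
        case tn then show ?thesis using alph_ge1[of da p1 p2 l1] gam_ge2[of da p1 p2 p3 l1] dist
          by (simp add: Rf_def v_def alph_neg gam_neg)
      next
        case pp then show ?thesis using alph_ge1[of da p1 p2 l1] gam_ge2[of da p1 p2 p3 l1]
            alph_ge1[of db q1 q2 l2] gam_ge2[of db q1 q2 q3 l2] dist
          by (auto simp: Rf_def v_def)
      qed
    qed
    then have "\<not> G4_jumping da db" by (rule no_jump)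
    then show False using J by simp
  qed
next
  assume c: "((da < 0 \<and> db = 1) \<or> (da = 0 \<and> db \<ge> 0) \<or> (da = 1 \<and> db < 0) \<or>
     (da \<ge> 0 \<and> db = 0) \<or> (da = 1 \<and> db = 1))"
  have dPQ: "proj_distinct P0 Q0" by (simp add: proj_distinct_def P0_def Q0_def)
  have a1: "alph 1 P0 Q0 l" for l using alph_ge1[OF _ dPQ] by simp
  have g1: "gam 1 P0 Q0 Z0 1" using gam_std_pos by simp
  from c consider (i) "da < 0" "db = 1" | (ii) "da = 0" "db \<ge> 0" | (iii) "da = 1" "db < 0"
    | (iv) "da \<ge> 0" "db = 0" | (v) "da = 1" "db = 1" by argo
  then show "G4_jumping da db"
  proof cases
    case i
    show ?thesis
      by (rule jump_by[OF std_adm std_adm, of 1 1 1 1 "-1" 1])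
        (use i a1 g1 gam_std_m1 in \<open>simp_all add: Rf_def alph_neg gam_neg\<close>)
  next
    case iii
    show ?thesis
      by (rule jump_by[OF std_adm std_adm, of 1 1 1 "-1" 1 1])
        (use iii a1 g1 gam_std_m1 in \<open>simp_all add: Rf_def alph_neg gam_neg\<close>)
  next
    case v
    show ?thesis
      by (rule jump_by[OF std_adm std_adm, of 1 1 1 "-1" "-1" 1])
        (use v a1 g1 gam_std_m1 in \<open>simp_all add: Rf_def\<close>)
  next
    case ii
    show ?thesis
      by (rule jump_by[OF std_adm std_adm, of 1 1 1 2 1 1])
        (use ii gam_std_pos[of db] in \<open>simp_all add: Rf_def alph_0 gam_0\<close>)
  next
    case iv
    show ?thesis
      by (rule jump_by[OF std_adm std_adm, of 1 1 1 1 2 1])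
        (use iv gam_std_pos[of da] in \<open>simp_all add: Rf_def alph_0 gam_0\<close>)
  qed
qed

end
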